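(* Let $F_{\mathrm{mod}}$ be a toy model H\'enon-like diffeomorphism with $DF_{\mathrm{mod}}(w)=\begin{pmatrix}A_1(w)&\mathbf 0\\ C_1(w)&D_1(w)\end{pmatrix}$ and $DF^N_{\mathrm{mod}}(w)=\begin{pmatrix}A_N(w)&\mathbf 0\\ C_N(w)&D_N(w)\end{pmatrix}$. Suppose $\|D_1\|<m(A_1)$. Then there is $\kappa>0$, independent of $N$, such that $\|C_N A_N^{-1}\|<\kappa$ for all $N\ge1$.
   Context: A toy model H\'enon-like map is $F_{\mathrm{mod}}(x,y,z)=(f(x)-\varepsilon(x,y),\,x,\,\delta(x,y,z))$ on a box $B\subset\mathbb R^3$ ($f$ unimodal, $\varepsilon,\delta$ small analytic). In the block decomposition of $DF_{\mathrm{mod}}$ with respect to $\mathbb R^2\times\mathbb R$, $A_1(w)=DF_{2d}(x,y)$ is the $2\times2$ derivative of $F_{2d}(x,y)=(f(x)-\varepsilon(x,y),x)$, $\mathbf 0$ is the zero column, $C_1(w)=(\partial_x\delta(w)\ \partial_y\delta(w))$ and $D_1(w)=\partial_z\delta(w)$; $A_N,C_N,D_N$ are the corresponding blocks of $DF^N_{\mathrm{mod}}(w)$. For a linear map $L$, $m(L)=\|L^{-1}\|^{-1}$ is the minimum expansion rate; norms and $m(\cdot)$ of these matrix-valued functions are taken as sup (respectively inf) over points of the domain. *)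

theory Defs
  imports "HOL-Analysis.Analysis"
begin

text \<open>Points of the box are vectors w = (x,y,z) in real^3, with x = w$1, y = w$2, z = w$3.\<close>

definition Fmod :: "(real \<Rightarrow> real) \<Rightarrow> (real^2 \<Rightarrow> real) \<Rightarrow> (real^3 \<Rightarrow> real) \<Rightarrow> real^3 \<Rightarrow> real^3" where
  "Fmod f eps delta w = vector [f (w$1) - eps (vector [w$1, w$2]), w$1, delta w]"

definition DFN :: "(real^3 \<Rightarrow> real^3) \<Rightarrow> nat \<Rightarrow> real^3 \<Rightarrow> real^3^3" where
  "DFN F N w = matrix (frechet_derivative (F ^^ N) (at w))"

definition emb23 :: "2 \<Rightarrow> 3" where
  "emb23 i = (if i = 1 then 1 else 2)"

text \<open>Blocks with respect to R^2 x R: M = (A 0; C D).\<close>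
definition blockA :: "real^3^3 \<Rightarrow> real^2^2" where
  "blockA M = (\<chi> i j. M $ emb23 i $ emb23 j)"

definition blockC :: "real^3^3 \<Rightarrow> real^2" where
  "blockC M = (\<chi> j. M $ 3 $ emb23 j)"

definition blockD :: "real^3^3 \<Rightarrow> real" where
  "blockD M = M $ 3 $ 3"

definition norm_CAinv :: "real^2 \<Rightarrow> real^2^2 \<Rightarrow> real" where
  "norm_CAinv C A = onorm (\<lambda>v. C \<bullet> (matrix_inv A *v v))"

definition min_exp :: "real^2^2 \<Rightarrow> real" where
  "min_exp L = (if invertible L then inverse (onorm (\<lambda>v. matrix_inv L *v v)) else 0)"

definition unimodal_on :: "(real \<Rightarrow> real) \<Rightarrow> real \<Rightarrow> real \<Rightarrow> bool" where
  "unimodal_on f a b \<longleftrightarrow> (\<exists>c. a < c \<and> c < b \<and> strict_mono_on {a..c} f \<and> strict_antimono_on {c..b} f)"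

end

theory Submission
  imports Defs
begin

lemma vec3_eq: "(vector [x,y,z] :: real^3) = x *\<^sub>R axis 1 1 + y *\<^sub>R axis 2 1 + z *\<^sub>R axis 3 1"
  by (simp add: vec_eq_iff forall_3 axis_def)

lemma has_derivative_vec3:
  assumes "(g1 has_derivative g1') F" "(g2 has_derivative g2') F" "(g3 has_derivative g3') F"
  shows "((\<lambda>w. vector[g1 w, g2 w, g3 w] :: real^3) has_derivative (\<lambda>h. vector[g1' h, g2' h, g3' h])) F"
  unfolding vec3_eq by (intro derivative_intros assms)

lemma lin_p: "bounded_linear (\<lambda>w::real^3. vector [w$1, w$2] :: real^2)"
proof -
  have "linear (\<lambda>w::real^3. vector [w$1, w$2] :: real^2)"
    by (auto simp: linear_iff vec_eq_iff forall_2)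
  then show ?thesis by (simp add: linear_conv_bounded_linear)
qed

lemma lin_nth: "bounded_linear (\<lambda>w::real^3. w$i)"
  by (rule bounded_linear_vec_nth)

lemma Fmod_deriv:
  fixes w :: "real^3"
  assumes fd: "(f has_real_derivative f' (w$1)) (at (w$1))"
    and ed: "(eps has_derivative (\<lambda>h. eps_x p * h$1 + eps_y p * h$2)) (at p)"
    and p: "p = vector [w$1, w$2]"
    and dd: "(delta has_derivative (\<lambda>h. delta_x w * h$1 + delta_y w * h$2 + delta_z w * h$3)) (at w)"
  shows "(Fmod f eps delta has_derivative (\<lambda>h. vector [f' (w$1) * h$1 - (eps_x p * h$1 + eps_y p * h$2), h$1,
      delta_x w * h$1 + delta_y w * h$2 + delta_z w * h$3])) (at w)"
proof -
  have d1: "((\<lambda>w::real^3. w$1) has_derivative (\<lambda>h. h$1)) (at w)"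
    using bounded_linear_imp_has_derivative[OF lin_nth] .
  have dp: "((\<lambda>w::real^3. vector [w$1, w$2] :: real^2) has_derivative (\<lambda>h. vector [h$1, h$2])) (at w)"
    using bounded_linear_imp_has_derivative[OF lin_p] .
  have c1: "((\<lambda>w. f (w$1)) has_derivative (\<lambda>h. f' (w$1) * h$1)) (at w)"
    using diff_chain_at[OF d1 has_field_derivative_imp_has_derivative[OF fd]] by (simp add: o_def)
  have c2: "((\<lambda>w. eps (vector [w$1, w$2])) has_derivative (\<lambda>h. eps_x p * h$1 + eps_y p * h$2)) (at w)"
    using diff_chain_at[OF dp, of eps "\<lambda>h. eps_x p * h$1 + eps_y p * h$2"] ed p by (simp add: o_def)
  show ?thesis unfolding Fmod_def[abs_def]
    by (intro has_derivative_vec3 derivative_intros c1 c2 d1 dd)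
qed


definition Zb :: "real^3^3 \<Rightarrow> bool" where "Zb M \<longleftrightarrow> M$1$3 = 0 \<and> M$2$3 = 0"

lemma emb23_simps[simp]: "emb23 1 = 1" "emb23 2 = 2"
  by (simp_all add: emb23_def)

lemma Zb_mult: "Zb P \<Longrightarrow> Zb Q \<Longrightarrow> Zb (P ** Q)"
  by (simp add: Zb_def matrix_matrix_mult_def sum_3)

lemma blockA_mult: "Zb P \<Longrightarrow> blockA (P ** Q) = blockA P ** blockA Q"
  by (simp add: Zb_def blockA_def matrix_matrix_mult_def sum_3 sum_2 vec_eq_iff forall_2)

lemma blockC_mult: "blockC (P ** Q) = blockC P v* blockA Q + blockD P *\<^sub>R blockC Q"
  by (simp add: blockC_def blockA_def blockD_def matrix_matrix_mult_def vector_matrix_mult_def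
      sum_3 sum_2 vec_eq_iff forall_2 algebra_simps)

lemma Zb_one: "Zb (mat 1)" by (simp add: Zb_def mat_def)
lemma blockA_one: "blockA (mat 1) = mat 1"
  by (simp add: blockA_def mat_def vec_eq_iff forall_2)
lemma blockC_one: "blockC (mat 1) = 0"
  by (simp add: blockC_def mat_def vec_eq_iff forall_2)

lemma matrix_inv_props:
  fixes A :: "real^'n^'n"
  assumes "invertible A"
  shows "A ** matrix_inv A = mat 1" "matrix_inv A ** A = mat 1"
proof -
  have "\<exists>A'. A ** A' = mat 1 \<and> A' ** A = mat 1" using assms by (simp add: invertible_def)
  then have "A ** matrix_inv A = mat 1 \<and> matrix_inv A ** A = mat 1"
    unfolding matrix_inv_def by (rule someI_ex)
  then show "A ** matrix_inv A = mat 1" "matrix_inv A ** A = mat 1" by auto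
qed

lemma matrix_inv_mult_apply:
  fixes A B :: "real^'n^'n"
  assumes "invertible A" "invertible B"
  shows "matrix_inv (A ** B) *v v = matrix_inv B *v (matrix_inv A *v v)"
proof -
  let ?X = "matrix_inv (A ** B)"
  have iab: "invertible (A ** B)" using invertible_mult assms by blast
  have 1: "?X ** (A ** B) = mat 1" using matrix_inv_props(2)[OF iab] .
  have 2: "(A ** B) ** (matrix_inv B ** matrix_inv A) = mat 1"
  proof -
    have "(A ** B) ** (matrix_inv B ** matrix_inv A) = A ** (B ** matrix_inv B) ** matrix_inv A"
      by (simp add: matrix_mul_assoc)
    also have "\<dots> = mat 1" using matrix_inv_props(1)[OF assms(1)] matrix_inv_props(1)[OF assms(2)]
      by simp
    finally show ?thesis .
  qed
  have "?X = ?X ** ((A ** B) ** (matrix_inv B ** matrix_inv A))" using 2 by simp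
  also have "\<dots> = (?X ** (A ** B)) ** (matrix_inv B ** matrix_inv A)" by (simp add: matrix_mul_assoc)
  also have "\<dots> = matrix_inv B ** matrix_inv A" using 1 by simp
  finally show ?thesis by (simp add: matrix_vector_mul_assoc)
qed

lemma gN_bl: "bounded_linear (\<lambda>v. (c::real^'n) \<bullet> ((M::real^'n^'n) *v v))"
  by (rule bounded_linear_compose[OF bounded_linear_inner_right matrix_vector_mul_bounded_linear])

lemma min_exp_pos:
  assumes "0 < m" "m \<le> min_exp L"
  shows "invertible L" "onorm (\<lambda>v. matrix_inv L *v v) \<le> inverse m"
proof -
  show il: "invertible L" using assms by (auto simp: min_exp_def split: if_splits)
  have "min_exp L = inverse (onorm (\<lambda>v. matrix_inv L *v v))" using il by (simp add: min_exp_def)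
  then show "onorm (\<lambda>v. matrix_inv L *v v) \<le> inverse m" using assms
    by (metis inverse_inverse_eq le_imp_inverse_le)
qed

lemma min_exp_nonneg: "0 \<le> min_exp L"
  by (simp add: min_exp_def onorm_pos_le)


theorem lemma7p2:
  fixes f f' :: "real \<Rightarrow> real"
    and eps eps_x eps_y :: "real^2 \<Rightarrow> real"
    and delta delta_x delta_y delta_z :: "real^3 \<Rightarrow> real"
    and a b :: "real^3"
    and I :: "real set" and V :: "(real^2) set" and U :: "(real^3) set"
  assumes box: "\<forall>i. a $ i < b $ i"
    and U: "open U" "cbox a b \<subseteq> U"
    and V: "open V" "\<forall>w\<in>U. vector [w$1, w$2] \<in> V"
    and I: "open I" "\<forall>w\<in>U. w$1 \<in> I"
    and f_C1: "\<forall>x\<in>I. (f has_real_derivative f' x) (at x)" "continuous_on I f'"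
    and f_unimodal: "unimodal_on f (a$1) (b$1)"
    and eps_C1: "\<forall>p\<in>V. (eps has_derivative (\<lambda>h. eps_x p * h$1 + eps_y p * h$2)) (at p)"
      "continuous_on V eps_x" "continuous_on V eps_y"
    and delta_C1: "\<forall>w\<in>U. (delta has_derivative
         (\<lambda>h. delta_x w * h$1 + delta_y w * h$2 + delta_z w * h$3)) (at w)"
      "continuous_on U delta_x" "continuous_on U delta_y" "continuous_on U delta_z"
    and invariant: "Fmod f eps delta ` cbox a b \<subseteq> cbox a b"
    and hyp: "(SUP w\<in>cbox a b. \<bar>blockD (DFN (Fmod f eps delta) 1 w)\<bar>)
              < (INF w\<in>cbox a b. min_exp (blockA (DFN (Fmod f eps delta) 1 w)))"
  shows "\<exists>\<kappa>>0. \<forall>N\<ge>1. \<forall>w\<in>cbox a b.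
           norm_CAinv (blockC (DFN (Fmod f eps delta) N w)) (blockA (DFN (Fmod f eps delta) N w)) < \<kappa>"
proof -
  define F where "F = Fmod f eps delta"
  define L where "L = (\<lambda>w::real^3. \<lambda>h::real^3. vector [f' (w$1) * h$1 - (eps_x (vector [w$1, w$2]) * h$1 + eps_y (vector [w$1, w$2]) * h$2), h$1,
      delta_x w * h$1 + delta_y w * h$2 + delta_z w * h$3] :: real^3)"
  let ?C = "cbox a b"
  have hd: "(F has_derivative L w) (at w)" if "w \<in> ?C" for w
  proof -
    have wU: "w \<in> U" using that U by auto
    show ?thesis unfolding F_def L_def
      by (rule Fmod_deriv[OF _ _ refl]) (use wU f_C1 I V eps_C1 delta_C1 in auto)
  qed
  have orb: "(F ^^ N) w \<in> ?C" if "w \<in> ?C" for N w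
    using that by (induction N) (use invariant F_def in auto)
  have diffN: "(F ^^ N) differentiable (at w)" if "w \<in> ?C" for N w
    using that
  proof (induction N)
    case 0 then show ?case by (simp add: differentiable_ident)
  next
    case (Suc N)
    have "F differentiable (at ((F ^^ N) w))" using hd[OF orb[OF Suc.prems]] differentiable_def by blast
    then show ?case using differentiable_chain_at[OF Suc.IH[OF Suc.prems]] by (simp add: o_def)
  qed
  have linfd: "linear (frechet_derivative g (at x))" if "g differentiable (at x)" for g :: "real^3 \<Rightarrow> real^3" and x
    using frechet_derivative_works that has_derivative_linear by blast
  have DF1: "DFN F 1 p = matrix (L p)" if "p \<in> ?C" for p
    using frechet_derivative_at[OF hd[OF that]] by (simp add: DFN_def)
  have DFrec: "DFN F (Suc N) w = DFN F 1 ((F ^^ N) w) ** DFN F N w" if "w \<in> ?C" for N w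
  proof -
    have dF: "F differentiable (at ((F ^^ N) w))" using hd[OF orb[OF that]] differentiable_def by blast
    have "frechet_derivative (F \<circ> F ^^ N) (at w) = frechet_derivative F (at ((F ^^ N) w)) \<circ> frechet_derivative (F ^^ N) (at w)"
      by (rule frechet_derivative_compose[OF diffN[OF that] dF])
    then show ?thesis
      using matrix_compose[OF linfd[OF diffN[OF that]] linfd[OF dF]]
      by (simp add: DFN_def)
  qed
  have DF0: "DFN F 0 w = mat 1" for w
    using frechet_derivative_at[OF has_derivative_id, of w]
    by (simp add: DFN_def id_def[symmetric] matrix_id_mat_1)
  have Z1: "Zb (DFN F 1 p)" and C1: "blockC (DFN F 1 p) = vector [delta_x p, delta_y p]"
    and D1: "blockD (DFN F 1 p) = delta_z p" if "p \<in> ?C" for p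
    using DF1[OF that]
    by (simp_all add: Zb_def blockC_def blockD_def matrix_def L_def axis_def vec_eq_iff forall_2)
  have bnd: "\<exists>K. \<forall>p\<in>?C. \<bar>g p\<bar> \<le> K" if "continuous_on U g" for g :: "real^3 \<Rightarrow> real"
  proof -
    have "compact (g ` ?C)"
      by (rule compact_continuous_image[OF continuous_on_subset[OF that U(2)] compact_cbox])
    then show ?thesis using compact_imp_bounded bounded_real by (metis image_eqI)
  qed
  obtain Kx where Kx: "\<forall>p\<in>?C. \<bar>delta_x p\<bar> \<le> Kx" using bnd[OF delta_C1(2)] by blast
  obtain Ky where Ky: "\<forall>p\<in>?C. \<bar>delta_y p\<bar> \<le> Ky" using bnd[OF delta_C1(3)] by blast
  obtain Kz where Kz: "\<forall>p\<in>?C. \<bar>delta_z p\<bar> \<le> Kz" using bnd[OF delta_C1(4)] by blast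
  have aC: "a \<in> ?C" using box by (simp add: mem_box_cart less_imp_le)
  define K where "K = Kx + Ky"
  have K0: "0 \<le> K" using Kx Ky aC unfolding K_def by (meson abs_ge_zero add_nonneg_nonneg order_trans)
  have C1n: "norm (blockC (DFN F 1 p)) \<le> K" if "p \<in> ?C" for p
  proof -
    have "norm (blockC (DFN F 1 p)) \<le> \<bar>delta_x p\<bar> + \<bar>delta_y p\<bar>"
      using norm_le_l1_cart[of "blockC (DFN F 1 p)"] C1[OF that] by (simp add: sum_2)
    then show ?thesis using Kx Ky that unfolding K_def by force
  qed
  define s where "s = (SUP w\<in>?C. \<bar>blockD (DFN F 1 w)\<bar>)"
  define m where "m = (INF w\<in>?C. min_exp (blockA (DFN F 1 w)))"
  have sm: "s < m" using hyp unfolding s_def m_def F_def .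
  have bdd: "bdd_above ((\<lambda>w. \<bar>blockD (DFN F 1 w)\<bar>) ` ?C)"
    using Kz D1 by (auto intro!: bdd_aboveI2[where M=Kz])
  have Dle: "\<bar>delta_z p\<bar> \<le> s" if "p \<in> ?C" for p
    using cSUP_upper[OF that bdd] D1[OF that] unfolding s_def by simp
  have s0: "0 \<le> s" using Dle[OF aC] by linarith
  have mle: "m \<le> min_exp (blockA (DFN F 1 p))" if "p \<in> ?C" for p
    unfolding m_def by (rule cINF_lower[OF _ that]) (auto intro!: bdd_belowI2[where m=0] min_exp_nonneg)
  have m0: "0 < m" using s0 sm by linarith
  define B where "B = K / (m - s)"
  have B0: "0 \<le> B" using K0 sm unfolding B_def by simp
  have Beq: "K + s * B = m * B" using sm unfolding B_def by (simp add: field_simps)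
  define g where "g = (\<lambda>M::real^3^3. \<lambda>v. blockC M \<bullet> (matrix_inv (blockA M) *v v))"
  have main: "\<forall>w\<in>?C. Zb (DFN F N w) \<and> invertible (blockA (DFN F N w)) \<and> onorm (g (DFN F N w)) \<le> B" for N
  proof (induction N)
    case 0
    have "invertible (mat 1 :: real^2^2)" unfolding invertible_def by (rule exI[of _ "mat 1"]) simp
    then show ?case using B0 by (simp add: DF0 Zb_one blockA_one blockC_one g_def onorm_zero)
  next
    case (Suc N)
    show ?case
    proof
      fix w assume w: "w \<in> ?C"
      define q where "q = (F ^^ N) w"
      have q: "q \<in> ?C" using orb[OF w] q_def by simp
      define P where "P = DFN F 1 q"
      define Q where "Q = DFN F N w"
      have PQ: "DFN F (Suc N) w = P ** Q" using DFrec[OF w] unfolding P_def Q_def q_def .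
      have ZP: "Zb P" and ZQ: "Zb Q" and iQ: "invertible (blockA Q)" and gQ: "onorm (g Q) \<le> B"
        using Z1[OF q] Suc.IH w unfolding P_def Q_def by auto
      have mP: "m \<le> min_exp (blockA P)" using mle[OF q] unfolding P_def .
      have iP: "invertible (blockA P)" and oP: "onorm (\<lambda>v. matrix_inv (blockA P) *v v) \<le> inverse m"
        using min_exp_pos[OF m0 mP] by auto
      have dP: "\<bar>blockD P\<bar> \<le> s" using Dle[OF q] D1[OF q] unfolding P_def by simp
      have cP: "norm (blockC P) \<le> K" using C1n[OF q] unfolding P_def .
      have A: "blockA (P ** Q) = blockA P ** blockA Q" using blockA_mult[OF ZP] .
      have gbound: "\<bar>g (P ** Q) v\<bar> \<le> B * norm v" for v
      proof -
        define u where "u = matrix_inv (blockA P) *v v"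
        have nu: "norm u \<le> inverse m * norm v"
        proof -
          have "norm u \<le> onorm (\<lambda>v. matrix_inv (blockA P) *v v) * norm v"
            unfolding u_def by (rule onorm) simp
          also have "\<dots> \<le> inverse m * norm v" using oP by (simp add: mult_right_mono)
          finally show ?thesis .
        qed
        have eq: "g (P ** Q) v = blockC P \<bullet> u + blockD P * g Q u"
        proof -
          have "g (P ** Q) v = (blockC P v* blockA Q + blockD P *\<^sub>R blockC Q) \<bullet> (matrix_inv (blockA Q) *v u)"
            unfolding g_def A blockC_mult u_def using matrix_inv_mult_apply[OF iP iQ] by simp
          also have "\<dots> = blockC P \<bullet> (blockA Q *v (matrix_inv (blockA Q) *v u)) + blockD P * g Q u"
            by (simp add: inner_add_left dot_lmul_matrix g_def)
          also have "blockA Q *v (matrix_inv (blockA Q) *v u) = u"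
            using matrix_inv_props(1)[OF iQ] by (simp add: matrix_vector_mul_assoc)
          finally show ?thesis .
        qed
        have t1: "\<bar>blockC P \<bullet> u\<bar> \<le> K * norm u"
          using Cauchy_Schwarz_ineq2[of "blockC P" u] cP by (meson mult_right_mono norm_ge_zero order_trans)
        have gQu: "\<bar>g Q u\<bar> \<le> B * norm u"
        proof -
          have "\<bar>g Q u\<bar> \<le> onorm (g Q) * norm u" using onorm[OF gN_bl] unfolding g_def by simp
          also have "\<dots> \<le> B * norm u" using gQ by (simp add: mult_right_mono)
          finally show ?thesis .
        qed
        have t2: "\<bar>blockD P * g Q u\<bar> \<le> s * (B * norm u)"
          using dP gQu by (simp add: abs_mult mult_mono' B0 s0)
        have "\<bar>g (P ** Q) v\<bar> \<le> (K + s * B) * norm u" using eq t1 t2 by (simp add: algebra_simps) 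
        also have "\<dots> = m * B * norm u" using Beq by simp
        also have "\<dots> \<le> m * B * (inverse m * norm v)" using nu m0 B0 by (simp add: mult_left_mono)
        also have "\<dots> = B * norm v" using m0 by (simp add: field_simps)
        finally show ?thesis .
      qed
      have "onorm (g (P ** Q)) \<le> B" by (rule onorm_le) (use gbound in simp)
      moreover have "invertible (blockA (P ** Q))" using A invertible_mult[OF iP iQ] by simp
      ultimately show "Zb (DFN F (Suc N) w) \<and> invertible (blockA (DFN F (Suc N) w)) \<and> onorm (g (DFN F (Suc N) w)) \<le> B"
        using PQ Zb_mult[OF ZP ZQ] by simp
    qed
  qed
  show ?thesis
  proof (intro exI[of _ "B + 1"] conjI allI impI ballI)
    show "0 < B + 1" using B0 by simp
    fix N :: nat and w assume "1 \<le> N" "w \<in> ?C"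
    then have "onorm (g (DFN F N w)) \<le> B" using main by blast
    then show "norm_CAinv (blockC (DFN (Fmod f eps delta) N w)) (blockA (DFN (Fmod f eps delta) N w)) < B + 1"
      unfolding norm_CAinv_def g_def F_def by simp
  qed
qed
end
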